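(* Let $h:X\to\mathbb{R}$ be convex and continuous and $f=g+h$. Let $x_0\in X$, let $\beta_i\ge 2\mathcal{L}$ for all $i\ge0$, and define the iterates $x_i=\mathrm{Prox}^h_{\beta_{i-1}}(\nabla G(x_{i-1},\omega_i),x_{i-1};x_0)$, $i=1,\dots,N$, and $\widehat x_N=\big[\sum_{i=1}^N\beta_{i-1}^{-1}\big]^{-1}\sum_{i=1}^N\beta_{i-1}^{-1}x_i$. Put $\zeta_i=\nabla G(x_{i-1},\omega_i)-\nabla g(x_{i-1})$ and $V=V_{x_0}$. Then there exist points $z_0=x_0,z_1,\dots,z_{N-1}\in X$, with $z_i$ a (measurable) function of $x_0,\zeta_1,\dots,\zeta_i$ only, such that for every realization and every $z\in X$, $$\Big[\sum_{i=1}^N\beta_{i-1}^{-1}\Big][f(\widehat x_N)-f(z)]\le\sum_{i=1}^N\beta_{i-1}^{-1}[f(x_i)-f(z)]\le V(x_0,z)-V(x_N,z)+\sum_{i=1}^N\Big[\frac{\langle\zeta_i,z-x_{i-1}\rangle}{\beta_{i-1}}+\frac{\|\zeta_i\|_*^2}{\beta_{i-1}^2}\Big]$$ $$\le 2V(x_0,z)+\sum_{i=1}^N\Big[\frac{\langle\zeta_i,z_{i-1}-x_{i-1}\rangle}{\beta_{i-1}}+\frac32\,\frac{\|\zeta_i\|_*^2}{\beta_{i-1}^2}\Big].$$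
   Context: $E$ is a finite-dimensional real Euclidean space with inner product $\langle\cdot,\cdot\rangle$; $\|\cdot\|$ is a norm on $E$ with conjugate norm $\|s\|_*=\max\{\langle s,x\rangle:\|x\|\le1\}$. $X\subset E$ is convex and closed with nonempty interior. $G:X\times\Omega\to\mathbb{R}$ with $G(\cdot,\omega)$ differentiable, $g(x)=\mathbb{E}\{G(x,\omega)\}$ finite, convex, differentiable on $X$ with $\|\nabla g(x)-\nabla g(x')\|_*\le\mathcal{L}\|x-x'\|$. $\omega_1,\omega_2,\dots$ are i.i.d. copies of $\omega$. $\vartheta:E\to\mathbb{R}$ is continuously differentiable, convex, with $\langle\nabla\vartheta(x)-\nabla\vartheta(x'),x-x'\rangle\ge\|x-x'\|^2$, and $\vartheta(x)\ge\vartheta(0)=0$. Bregman divergence: $V_{x_0}(x,z)=\vartheta(z-x_0)-\vartheta(x-x_0)-\langle\nabla\vartheta(x-x_0),z-x\rangle$. Composite proximal mapping: $\mathrm{Prox}^h_\beta(u,x;x_0)=\arg\min_{z\in X}\{\langle u,z\rangle+h(z)+\beta V_{x_0}(x,z)\}$. *)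

theory Defs
  imports "HOL-Probability.Probability"
begin

definition is_norm :: "('a::real_normed_vector \<Rightarrow> real) \<Rightarrow> bool" where
  "is_norm nrm \<longleftrightarrow> (\<forall>x. nrm x = 0 \<longleftrightarrow> x = 0) \<and> (\<forall>c x. nrm (c *\<^sub>R x) = \<bar>c\<bar> * nrm x)
     \<and> (\<forall>x y. nrm (x + y) \<le> nrm x + nrm y)"

definition dual_norm :: "('a::real_inner \<Rightarrow> real) \<Rightarrow> 'a \<Rightarrow> real" where
  "dual_norm nrm s = Sup {s \<bullet> x | x. nrm x \<le> 1}"

text \<open>Bregman divergence V_{x0}(x,z) of the d.g.f. vartheta with gradient dvt.\<close>
definition Vdiv :: "('a::real_inner \<Rightarrow> real) \<Rightarrow> ('a \<Rightarrow> 'a) \<Rightarrow> 'a \<Rightarrow> 'a \<Rightarrow> 'a \<Rightarrow> real" where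
  "Vdiv vt dvt x0 x z = vt (z - x0) - vt (x - x0) - dvt (x - x0) \<bullet> (z - x)"

definition prox :: "'a::real_inner set \<Rightarrow> ('a \<Rightarrow> real) \<Rightarrow> ('a \<Rightarrow> real) \<Rightarrow> ('a \<Rightarrow> 'a) \<Rightarrow> 'a
    \<Rightarrow> real \<Rightarrow> 'a \<Rightarrow> 'a \<Rightarrow> 'a" where
  "prox X h vt dvt x0 \<beta> u x =
     (SOME y. y \<in> X \<and> (\<forall>z\<in>X. u \<bullet> y + h y + \<beta> * Vdiv vt dvt x0 x y
                               \<le> u \<bullet> z + h z + \<beta> * Vdiv vt dvt x0 x z))"

primrec smd_iter :: "'a::real_inner set \<Rightarrow> ('a \<Rightarrow> real) \<Rightarrow> ('a \<Rightarrow> real) \<Rightarrow> ('a \<Rightarrow> 'a) \<Rightarrow> 'a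
    \<Rightarrow> (nat \<Rightarrow> real) \<Rightarrow> ('a \<Rightarrow> 'w \<Rightarrow> 'a) \<Rightarrow> (nat \<Rightarrow> 'w) \<Rightarrow> nat \<Rightarrow> 'a" where
  "smd_iter X h vt dvt x0 \<beta> dG \<omega> 0 = x0"
| "smd_iter X h vt dvt x0 \<beta> dG \<omega> (Suc i) =
     prox X h vt dvt x0 (\<beta> i) (dG (smd_iter X h vt dvt x0 \<beta> dG \<omega> i) (\<omega> (Suc i)))
       (smd_iter X h vt dvt x0 \<beta> dG \<omega> i)"

end

theory Submission
  imports Defs
begin

lemma nrm_basic:
  assumes "is_norm nrm"
  shows "nrm 0 = 0" "nrm (-x) = nrm x" "nrm x \<ge> 0" "nrm (x - y) = nrm (y - x)"
    "nrm (c *\<^sub>R x) = \<bar>c\<bar> * nrm x" "nrm (x + y) \<le> nrm x + nrm y"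
proof -
  show h0: "nrm 0 = 0" using assms unfolding is_norm_def by auto
  show hm: "nrm (-x) = nrm x" for x
  proof -
    have "nrm ((-1) *\<^sub>R x) = \<bar>-1\<bar> * nrm x" using assms unfolding is_norm_def by blast
    thus ?thesis by simp
  qed
  show "nrm x \<ge> 0"
  proof -
    have "nrm (x + (-x)) \<le> nrm x + nrm (-x)" using assms unfolding is_norm_def by blast
    thus ?thesis using h0 hm[of x] by simp
  qed
  show "nrm (x - y) = nrm (y - x)" using hm[of "x - y"] by simp
  show "nrm (c *\<^sub>R x) = \<bar>c\<bar> * nrm x" "nrm (x + y) \<le> nrm x + nrm y"
    using assms unfolding is_norm_def by auto
qed

lemma nrm_convex:
  assumes "is_norm nrm"
  shows "convex_on UNIV nrm"
proof (rule convex_onI)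
  fix t :: real and x y assume t: "0 < t" "t < 1"
  have "nrm ((1 - t) *\<^sub>R x + t *\<^sub>R y) \<le> nrm ((1 - t) *\<^sub>R x) + nrm (t *\<^sub>R y)"
    using nrm_basic[OF assms] by blast
  also have "\<dots> = (1 - t) * nrm x + t * nrm y" using nrm_basic[OF assms] t by simp
  finally show "nrm ((1 - t) *\<^sub>R x + t *\<^sub>R y) \<le> (1 - t) * nrm x + t * nrm y" .
qed simp

lemma nrm_equiv:
  fixes nrm :: "'a::euclidean_space \<Rightarrow> real"
  assumes "is_norm nrm"
  shows "\<exists>c>0. \<forall>x. nrm x \<ge> c * norm x"
proof -
  have cont: "continuous_on UNIV nrm"
    using convex_on_continuous[OF open_UNIV nrm_convex[OF assms]] .
  have ne: "sphere (0::'a) 1 \<noteq> {}"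
  proof -
    have "(SOME i. i \<in> Basis) \<in> sphere (0::'a) 1" using SOME_Basis by (simp add: norm_Basis)
    thus ?thesis by blast
  qed
  obtain m where m: "m \<in> sphere (0::'a) 1" "\<forall>y\<in>sphere 0 1. nrm m \<le> nrm y"
    using continuous_attains_inf[OF compact_sphere ne continuous_on_subset[OF cont]] by blast
  have mpos: "nrm m > 0"
  proof -
    have "m \<noteq> 0" using m by auto
    hence "nrm m \<noteq> 0" using assms unfolding is_norm_def by auto
    thus ?thesis using nrm_basic(3)[OF assms, of m] by linarith
  qed
  have "nrm x \<ge> nrm m * norm x" for x
  proof (cases "x = 0")
    case True thus ?thesis using nrm_basic[OF assms] by simp
  next
    case False
    have "inverse (norm x) *\<^sub>R x \<in> sphere 0 1" using False by (simp add: norm_inverse)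
    hence "nrm m \<le> nrm (inverse (norm x) *\<^sub>R x)" using m by blast
    also have "\<dots> = inverse (norm x) * nrm x" using nrm_basic(5)[OF assms] by simp
    finally show ?thesis using False by (simp add: field_simps)
  qed
  thus ?thesis using mpos by blast
qed

lemma dual_norm_le:
  fixes nrm :: "'a::euclidean_space \<Rightarrow> real"
  assumes "is_norm nrm"
  shows "s \<bullet> v \<le> dual_norm nrm s * nrm v" "dual_norm nrm s \<ge> 0"
proof -
  obtain c where c: "c > 0" "\<forall>x. nrm x \<ge> c * norm x" using nrm_equiv[OF assms] by blast
  let ?A = "{s \<bullet> x | x. nrm x \<le> 1}"
  have bdd: "bdd_above ?A"
  proof (rule bdd_aboveI)
    fix y assume "y \<in> ?A"
    then obtain x where x: "y = s \<bullet> x" "nrm x \<le> 1" by auto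
    have "c * norm x \<le> 1" using c x by (meson order_trans)
    hence "norm x \<le> 1 / c" using c by (simp add: pos_le_divide_eq mult.commute)
    hence "norm s * norm x \<le> norm s * (1/c)" by (rule mult_left_mono) simp
    hence "s \<bullet> x \<le> norm s * (1/c)" using norm_cauchy_schwarz[of s x] by linarith
    thus "y \<le> norm s * (1/c)" using x by simp
  qed
  have mem: "s \<bullet> x \<le> dual_norm nrm s" if "nrm x \<le> 1" for x
    unfolding dual_norm_def by (rule cSup_upper[OF _ bdd]) (use that in auto)
  show "dual_norm nrm s \<ge> 0" using mem[of 0] nrm_basic(1)[OF assms] by simp
  show "s \<bullet> v \<le> dual_norm nrm s * nrm v"
  proof (cases "nrm v = 0")
    case True hence "v = 0" using assms unfolding is_norm_def by auto
    thus ?thesis by (simp add: nrm_basic(1)[OF assms])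
  next
    case False
    hence np: "nrm v > 0" using nrm_basic(3)[OF assms, of v] by linarith
    have "nrm (inverse (nrm v) *\<^sub>R v) \<le> 1" using nrm_basic(5)[OF assms] np by simp
    hence "s \<bullet> (inverse (nrm v) *\<^sub>R v) \<le> dual_norm nrm s" by (rule mem)
    hence "inverse (nrm v) * (s \<bullet> v) \<le> dual_norm nrm s" by simp
    thus ?thesis using np by (simp add: field_simps)
  qed
qed

lemma mono01:
  fixes f :: "real \<Rightarrow> real"
  assumes "\<And>t. 0 \<le> t \<Longrightarrow> t \<le> 1 \<Longrightarrow> (f has_real_derivative D t) (at t within {0..1})"
    and "\<And>t. 0 \<le> t \<Longrightarrow> t \<le> 1 \<Longrightarrow> D t \<ge> 0"
  shows "f 0 \<le> f 1"
proof -
  obtain x where "x \<in> {0..1}" "f 1 - f 0 = (\<lambda>h. D x * h) (1 - 0)"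
    using mvt_very_simple[of 0 1 f "\<lambda>t h. D t * h"] assms(1) unfolding has_field_derivative_def
    by (metis atLeastAtMost_iff zero_le_one)
  thus ?thesis using assms(2)[of x] by auto
qed

lemma vt_chain:
  assumes vt_diff: "\<And>x. (vt has_derivative (\<lambda>v. dvt x \<bullet> v)) (at x)"
    and "(f has_derivative f') (at t within S)"
  shows "((\<lambda>t. vt (f t)) has_derivative (\<lambda>h. dvt (f t) \<bullet> f' h)) (at t within S)"
  using has_derivative_compose[OF assms(2) vt_diff] .

lemma vt_line:
  assumes vt_diff: "\<And>x. (vt has_derivative (\<lambda>v. dvt x \<bullet> v)) (at x)"
  shows "((\<lambda>t. vt (p + t *\<^sub>R d)) has_real_derivative (dvt (p + t *\<^sub>R d) \<bullet> d)) (at t within S)"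
proof -
  have "((\<lambda>t. p + t *\<^sub>R d) has_derivative (\<lambda>h. h *\<^sub>R d)) (at t within S)"
    by (auto intro!: derivative_eq_intros)
  from vt_chain[OF vt_diff this] show ?thesis
    unfolding has_field_derivative_def
    by (rule has_derivative_eq_rhs) (auto simp: fun_eq_iff mult.commute)
qed

lemma vt_strong_conv:
  fixes nrm :: "'a::euclidean_space \<Rightarrow> real"
  assumes norm: "is_norm nrm"
    and vt_diff: "\<And>x. (vt has_derivative (\<lambda>v. dvt x \<bullet> v)) (at x)"
    and vt_strong: "\<And>x x'. (dvt x - dvt x') \<bullet> (x - x') \<ge> (nrm (x - x'))\<^sup>2"
  shows "vt q - vt p - dvt p \<bullet> (q - p) \<ge> (nrm (q - p))\<^sup>2 / 2"
proof -
  define n where "n = nrm (q - p)"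
  define \<psi> where "\<psi> t = vt (p + t *\<^sub>R (q - p)) - t * (dvt p \<bullet> (q - p)) - t^2 / 2 * n^2" for t
  define D where "D t = dvt (p + t *\<^sub>R (q - p)) \<bullet> (q - p) - dvt p \<bullet> (q - p) - t * n^2" for t
  have der: "(\<psi> has_real_derivative D t) (at t within {0..1})" for t
    unfolding \<psi>_def[abs_def] D_def
    by (auto intro!: derivative_eq_intros vt_line[OF vt_diff] simp: power2_eq_square)
  have Dnn: "D t \<ge> 0" if "0 \<le> t" "t \<le> 1" for t
  proof (cases "t = 0")
    case True thus ?thesis by (simp add: D_def)
  next
    case False
    hence tp: "t > 0" using that by simp
    have "(dvt (p + t *\<^sub>R (q - p)) - dvt p) \<bullet> ((p + t *\<^sub>R (q - p)) - p)
          \<ge> (nrm ((p + t *\<^sub>R (q - p)) - p))\<^sup>2" by (rule vt_strong)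
    hence "t * ((dvt (p + t *\<^sub>R (q - p)) - dvt p) \<bullet> (q - p)) \<ge> (t * n)^2"
      using nrm_basic(5)[OF norm, of t "q - p"] tp by (simp add: n_def)
    hence "t * ((dvt (p + t *\<^sub>R (q - p)) - dvt p) \<bullet> (q - p)) \<ge> t * (t * n^2)"
      by (simp add: power2_eq_square algebra_simps)
    hence "(dvt (p + t *\<^sub>R (q - p)) - dvt p) \<bullet> (q - p) \<ge> t * n^2"
      using tp by simp
    thus ?thesis by (simp add: D_def inner_diff_left)
  qed
  have "\<psi> 0 \<le> \<psi> 1" using mono01[of \<psi> D] der Dnn by blast
  thus ?thesis by (simp add: \<psi>_def n_def)
qed

lemma g_line:
  fixes g :: "'a::real_inner \<Rightarrow> real"
  assumes X: "convex X" and g_diff: "\<And>x. x \<in> X \<Longrightarrow> (g has_derivative (\<lambda>v. dg x \<bullet> v)) (at x within X)"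
    and xy: "x \<in> X" "y \<in> X" and t: "0 \<le> t" "t \<le> 1"
  shows "((\<lambda>t. g (x + t *\<^sub>R (y - x))) has_real_derivative (dg (x + t *\<^sub>R (y - x)) \<bullet> (y - x))) (at t within {0..1})"
proof -
  have sub: "(\<lambda>t. x + t *\<^sub>R (y - x)) ` {0..1} \<subseteq> X"
  proof
    fix w assume "w \<in> (\<lambda>t. x + t *\<^sub>R (y - x)) ` {0..1}"
    then obtain s where s: "s \<in> {0..1}" "w = x + s *\<^sub>R (y - x)" by auto
    hence "w = (1 - s) *\<^sub>R x + s *\<^sub>R y" by (simp add: algebra_simps)
    thus "w \<in> X" using X xy s unfolding convex_alt by auto
  qed
  have d1: "((\<lambda>t. x + t *\<^sub>R (y - x)) has_derivative (\<lambda>h. h *\<^sub>R (y - x))) (at t within {0..1})"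
    by (auto intro!: derivative_eq_intros)
  from has_derivative_in_compose2[OF g_diff sub _ d1] t
  show ?thesis unfolding has_field_derivative_def
    by (auto elim!: has_derivative_eq_rhs simp: fun_eq_iff mult.commute)
qed

lemma descent:
  fixes g :: "'a::euclidean_space \<Rightarrow> real"
  assumes norm: "is_norm nrm"
    and X: "convex X" and g_diff: "\<And>x. x \<in> X \<Longrightarrow> (g has_derivative (\<lambda>v. dg x \<bullet> v)) (at x within X)"
    and g_lip: "\<And>x x'. x \<in> X \<Longrightarrow> x' \<in> X \<Longrightarrow> dual_norm nrm (dg x - dg x') \<le> L * nrm (x - x')"
    and xy: "x \<in> X" "y \<in> X"
  shows "g y \<le> g x + dg x \<bullet> (y - x) + L / 2 * (nrm (y - x))\<^sup>2"
proof -
  define n where "n = nrm (y - x)"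
  define \<psi> where "\<psi> t = t * (dg x \<bullet> (y - x)) + t^2 / 2 * L * n^2 - g (x + t *\<^sub>R (y - x))" for t
  define D where "D t = dg x \<bullet> (y - x) + t * L * n^2 - dg (x + t *\<^sub>R (y - x)) \<bullet> (y - x)" for t
  have der: "(\<psi> has_real_derivative D t) (at t within {0..1})" if "0 \<le> t" "t \<le> 1" for t
    unfolding \<psi>_def[abs_def] D_def
    by (auto intro!: derivative_eq_intros g_line[OF X g_diff xy that] simp: power2_eq_square)
  have Dnn: "D t \<ge> 0" if t: "0 \<le> t" "t \<le> 1" for t
  proof -
    let ?xt = "x + t *\<^sub>R (y - x)"
    have "?xt = (1 - t) *\<^sub>R x + t *\<^sub>R y" by (simp add: algebra_simps)
    hence xt: "?xt \<in> X" using X xy t unfolding convex_alt by auto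
    have "(dg ?xt - dg x) \<bullet> (y - x) \<le> dual_norm nrm (dg ?xt - dg x) * n"
      using dual_norm_le(1)[OF norm] n_def by blast
    also have "\<dots> \<le> L * nrm (?xt - x) * n"
      using g_lip[OF xt xy(1)] nrm_basic(3)[OF norm] n_def by (simp add: mult_right_mono)
    also have "nrm (?xt - x) = t * n" using nrm_basic(5)[OF norm, of t "y - x"] t n_def by simp
    finally have "(dg ?xt - dg x) \<bullet> (y - x) \<le> t * L * n^2" by (simp add: power2_eq_square algebra_simps)
    thus ?thesis by (simp add: D_def inner_diff_left)
  qed
  have "\<psi> 0 \<le> \<psi> 1" using mono01[of \<psi> D] der Dnn by blast
  thus ?thesis by (simp add: \<psi>_def n_def algebra_simps)
qed

lemma grad_ineq:
  fixes g :: "'a::real_inner \<Rightarrow> real"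
  assumes X: "convex X" and g_diff: "\<And>x. x \<in> X \<Longrightarrow> (g has_derivative (\<lambda>v. dg x \<bullet> v)) (at x within X)"
    and g_convex: "convex_on X g"
    and xy: "x \<in> X" "z \<in> X"
  shows "g z \<ge> g x + dg x \<bullet> (z - x)"
proof (rule ccontr)
  assume "\<not> ?thesis"
  hence pos: "dg x \<bullet> (z - x) - (g z - g x) > 0" by simp
  define \<psi> where "\<psi> t = g (x + t *\<^sub>R (z - x)) - t * (g z - g x)" for t
  have "(\<psi> has_real_derivative (dg (x + 0 *\<^sub>R (z - x)) \<bullet> (z - x) - (g z - g x))) (at 0 within {0..1})"
    unfolding \<psi>_def[abs_def]
    by (auto intro!: derivative_eq_intros g_line[OF X g_diff xy])
  hence "(\<psi> has_real_derivative (dg x \<bullet> (z - x) - (g z - g x))) (at 0 within {0..1})" by simp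
  from has_real_derivative_pos_inc_right[OF this pos] obtain d where
    d: "d > 0" "\<And>h. h > 0 \<Longrightarrow> 0 + h \<in> {0..1} \<Longrightarrow> h < d \<Longrightarrow> \<psi> 0 < \<psi> (0 + h)" by blast
  define h where "h = min (d/2) 1"
  have h: "h > 0" "h \<le> 1" "h < d" using d by (auto simp: h_def)
  have "\<psi> 0 < \<psi> h" using d(2)[of h] h by auto
  moreover have "\<psi> h \<le> \<psi> 0"
  proof -
    have "x + h *\<^sub>R (z - x) = (1 - h) *\<^sub>R x + h *\<^sub>R z" by (simp add: algebra_simps)
    hence "g (x + h *\<^sub>R (z - x)) \<le> (1 - h) * g x + h * g z"
      using convex_onD[OF g_convex, of h x z] h xy by simp
    thus ?thesis by (simp add: \<psi>_def algebra_simps)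
  qed
  ultimately show False by simp
qed

lemma inner_line:
  "((\<lambda>t. c \<bullet> (p + t *\<^sub>R d)) has_real_derivative (c \<bullet> d)) (at t within S)"
proof -
  have "((\<lambda>t. c \<bullet> p + (c \<bullet> d) * t) has_real_derivative (c \<bullet> d)) (at t within S)"
    using DERIV_add[OF DERIV_const[of "c \<bullet> p"] DERIV_cmult_Id[of "c \<bullet> d"]] by simp
  thus ?thesis by (simp add: inner_add_right mult.commute)
qed

lemma three_point:
  "(dvt (p - x0) - dvt (x - x0)) \<bullet> (z - p) = Vdiv vt dvt x0 x z - Vdiv vt dvt x0 p z - Vdiv vt dvt x0 x p"
  by (simp add: Vdiv_def inner_diff_left inner_diff_right algebra_simps)

lemma prox_vi:
  fixes X :: "'a::real_inner set"
  assumes X: "convex X"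
    and vt_diff: "\<And>x. (vt has_derivative (\<lambda>v. dvt x \<bullet> v)) (at x)"
    and h_convex: "convex_on X h" and \<beta>: "\<beta> > 0" and p: "p \<in> X"
    and minp: "\<forall>z\<in>X. u \<bullet> p + h p + \<beta> * Vdiv vt dvt x0 x p \<le> u \<bullet> z + h z + \<beta> * Vdiv vt dvt x0 x z"
    and z: "z \<in> X"
  shows "u \<bullet> (p - z) + h p - h z \<le> \<beta> * (Vdiv vt dvt x0 x z - Vdiv vt dvt x0 p z - Vdiv vt dvt x0 x p)"
proof -
  define D0 where "D0 = u \<bullet> (z - p) + (h z - h p) + \<beta> * ((dvt (p - x0) - dvt (x - x0)) \<bullet> (z - p))"
  have "D0 \<ge> 0"
  proof (rule ccontr)
    assume "\<not> D0 \<ge> 0" hence neg: "D0 < 0" by simp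
    define \<psi> where "\<psi> t = u \<bullet> (p + t *\<^sub>R (z - p)) + t * (h z - h p)
       + \<beta> * (vt ((p - x0) + t *\<^sub>R (z - p)) - vt (x - x0) - dvt (x - x0) \<bullet> (p + t *\<^sub>R (z - p) - x))" for t
    have der0: "(\<psi> has_real_derivative (u \<bullet> (z - p) + (h z - h p)
         + \<beta> * (dvt ((p - x0) + 0 *\<^sub>R (z - p)) \<bullet> (z - p) - dvt (x - x0) \<bullet> (z - p)))) (at 0 within {0..1})"
      unfolding \<psi>_def[abs_def]
      by (auto intro!: derivative_eq_intros vt_line[OF vt_diff] inner_line simp: inner_diff_right)
    have "(\<psi> has_real_derivative D0) (at 0 within {0..1})"
      using der0 by (simp add: D0_def inner_diff_left)
    from has_real_derivative_neg_dec_right[OF this neg] obtain d where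
      d: "d > 0" "\<And>h. h > 0 \<Longrightarrow> 0 + h \<in> {0..1} \<Longrightarrow> h < d \<Longrightarrow> \<psi> 0 > \<psi> (0 + h)" by blast
    define t where "t = min (d/2) 1"
    have t: "t > 0" "t \<le> 1" "t < d" using d by (auto simp: t_def)
    have "\<psi> 0 > \<psi> t" using d(2)[of t] t by auto
    moreover have "\<psi> t \<ge> \<psi> 0"
    proof -
      have eq: "p + t *\<^sub>R (z - p) = (1 - t) *\<^sub>R p + t *\<^sub>R z" by (simp add: algebra_simps)
      hence pt: "p + t *\<^sub>R (z - p) \<in> X" using X p z t unfolding convex_alt by auto
      have hc: "h (p + t *\<^sub>R (z - p)) \<le> h p + t * (h z - h p)"
        using convex_onD[OF h_convex, of t p z] t p z eq by (simp add: algebra_simps)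
      have "u \<bullet> p + h p + \<beta> * Vdiv vt dvt x0 x p \<le> u \<bullet> (p + t *\<^sub>R (z - p)) + h (p + t *\<^sub>R (z - p))
              + \<beta> * Vdiv vt dvt x0 x (p + t *\<^sub>R (z - p))" using minp pt by blast
      moreover have eq2: "(p - x0) + t *\<^sub>R (z - p) = p + t *\<^sub>R (z - p) - x0" by (simp add: algebra_simps)
      ultimately show ?thesis using hc unfolding \<psi>_def Vdiv_def eq2 by simp
    qed
    ultimately show False by simp
  qed
  hence "0 \<le> u \<bullet> (z - p) + (h z - h p) + \<beta> * (Vdiv vt dvt x0 x z - Vdiv vt dvt x0 p z - Vdiv vt dvt x0 x p)"
    using three_point[of dvt p x0 x z vt] unfolding D0_def by simp
  moreover have "u \<bullet> (p - z) = - (u \<bullet> (z - p))" by (simp add: inner_diff_right)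
  ultimately show ?thesis by linarith
qed

lemma h_growth:
  fixes X :: "'a::euclidean_space set"
  assumes X: "convex X" "closed X" and q: "q \<in> X"
    and h_convex: "convex_on X h" and h_cont: "continuous_on X h"
  shows "\<exists>K\<ge>0. \<forall>y\<in>X. norm (y - q) \<ge> 1 \<longrightarrow> h y \<ge> h q - K * norm (y - q)"
proof -
  have cpt: "compact (X \<inter> cball q 1)" using closed_Int_compact[OF X(2) compact_cball] .
  have ne: "X \<inter> cball q 1 \<noteq> {}" using q by auto
  obtain m0 where m0: "m0 \<in> X \<inter> cball q 1" "\<forall>w\<in>X \<inter> cball q 1. h m0 \<le> h w"
    using continuous_attains_inf[OF cpt ne continuous_on_subset[OF h_cont]] by blast
  define m where "m = h m0"
  have mle: "m \<le> h w" if "w \<in> X \<inter> cball q 1" for w using m0 that m_def by blast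
  define K where "K = h q - m"
  have K0: "K \<ge> 0" using mle[of q] q by (simp add: K_def)
  have "h y \<ge> h q - K * norm (y - q)" if y: "y \<in> X" "norm (y - q) \<ge> 1" for y
  proof -
    define r where "r = norm (y - q)"
    have r: "r \<ge> 1" using y r_def by simp
    define q' where "q' = (1 - 1/r) *\<^sub>R q + (1/r) *\<^sub>R y"
    have r01: "0 \<le> 1/r" "1/r \<le> 1" using r by auto
    have q'X: "q' \<in> X" using X(1) q y r01 unfolding q'_def convex_alt by auto
    have "q' - q = (1/r) *\<^sub>R (y - q)" by (simp add: q'_def algebra_simps)
    hence "norm (q' - q) = 1" using r using y(2) by (auto simp: r_def)
    hence "q' \<in> cball q 1" by (simp add: dist_norm norm_minus_commute)
    hence "m \<le> h q'" using mle q'X by blast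
    also have "h q' \<le> (1 - 1/r) * h q + (1/r) * h y"
      using convex_onD[OF h_convex, of "1/r" q y] r01 q y unfolding q'_def by simp
    finally have "r * m \<le> r * ((1 - 1/r) * h q + (1/r) * h y)" using r by simp
    also have "\<dots> = (r - 1) * h q + h y" using r by (simp add: field_simps)
    finally show ?thesis unfolding K_def r_def[symmetric] by (simp add: algebra_simps)
  qed
  thus ?thesis using K0 by blast
qed

lemma quad_grow:
  fixes A B C d s :: real
  assumes "A > 0" "B \<ge> 0" "C \<ge> 0" "d \<ge> 0" "s > 1 + (B + C + B * d) / A"
  shows "A * s^2 > B * (s + d) + C"
proof -
  have "(B + C + B * d) / A \<ge> 0" using assms by (intro divide_nonneg_pos add_nonneg_nonneg mult_nonneg_nonneg) auto
  hence s1: "s > 1" using assms by linarith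
  have "A * s > A + (B + C + B * d)" using assms(1,5) by (simp add: field_simps)
  hence "A * s * s > (A + (B + C + B * d)) * s" using s1 by (simp add: mult_strict_right_mono)
  moreover have "(A + (B + C + B * d)) * s \<ge> A + B * s + C + B * d"
  proof -
    have "A * s \<ge> A * 1" using s1 assms by (intro mult_left_mono) auto
    moreover have "C * s \<ge> C * 1" using s1 assms by (intro mult_left_mono) auto
    moreover have "(B * d) * s \<ge> (B * d) * 1" using s1 assms by (intro mult_left_mono) auto
    ultimately show ?thesis by (simp add: algebra_simps)
  qed
  ultimately show ?thesis using assms by (simp add: power2_eq_square algebra_simps)
qed

lemma prox_exists:
  fixes X :: "'a::euclidean_space set"
  assumes norm: "is_norm nrm"
    and X: "convex X" "closed X" and q: "q \<in> X"
    and vt_diff: "\<And>x. (vt has_derivative (\<lambda>v. dvt x \<bullet> v)) (at x)"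
    and vt_strong: "\<And>x x'. (dvt x - dvt x') \<bullet> (x - x') \<ge> (nrm (x - x'))\<^sup>2"
    and h_convex: "convex_on X h" and h_cont: "continuous_on X h"
    and \<beta>: "\<beta> > 0"
  shows "\<exists>p\<in>X. \<forall>z\<in>X. u \<bullet> p + h p + \<beta> * Vdiv vt dvt x0 x p \<le> u \<bullet> z + h z + \<beta> * Vdiv vt dvt x0 x z"
proof -
  define F where "F y = u \<bullet> y + h y + \<beta> * Vdiv vt dvt x0 x y" for y
  have vtc: "continuous_on UNIV vt"
    using vt_diff has_derivative_continuous continuous_at_imp_continuous_on by blast
  have Fc: "continuous_on X F"
    unfolding F_def Vdiv_def
    by (intro continuous_intros h_cont continuous_on_compose2[OF vtc]) auto
  obtain c where c: "c > 0" "\<forall>x. nrm x \<ge> c * norm x" using nrm_equiv[OF norm] by blast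
  obtain K where K: "K \<ge> 0" "\<forall>y\<in>X. norm (y - q) \<ge> 1 \<longrightarrow> h y \<ge> h q - K * norm (y - q)"
    using h_growth[OF X q h_convex h_cont] by blast
  have Vlow: "Vdiv vt dvt x0 x y \<ge> (c * norm (y - x))^2 / 2" for y
  proof -
    have "Vdiv vt dvt x0 x y \<ge> (nrm ((y - x0) - (x - x0)))\<^sup>2 / 2"
      unfolding Vdiv_def using vt_strong_conv[OF norm vt_diff vt_strong, of "y - x0" "x - x0"] by simp
    moreover have "nrm (y - x) \<ge> c * norm (y - x)" using c by blast
    hence "(nrm (y - x))^2 \<ge> (c * norm (y - x))^2"
      using c(1) by (intro power_mono) auto
    ultimately show ?thesis by simp
  qed
  define A where "A = \<beta> * c^2 / 2"
  define B where "B = norm u + K"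
  define C where "C = \<beta> * Vdiv vt dvt x0 x q"
  define d where "d = norm (q - x)"
  define R where "R = 1 + d + (B + C + B * d) / A"
  have A0: "A > 0" using \<beta> c by (simp add: A_def)
  have B0: "B \<ge> 0" using K by (simp add: B_def)
  have "Vdiv vt dvt x0 x q \<ge> 0" using Vlow[of q] zero_le_power2[of "c * norm (q - x)"] by linarith
  hence C0: "C \<ge> 0" unfolding C_def using \<beta> by simp
  have d0: "d \<ge> 0" by (simp add: d_def)
  have R1: "R \<ge> 1" unfolding R_def using A0 B0 C0 d0 by (simp add: mult_nonneg_nonneg)
  have far: "F y > F q" if y: "y \<in> X" "norm (y - q) > R" for y
  proof -
    define r where "r = norm (y - q)"
    have r1: "r \<ge> 1" using y R1 r_def by simp
    have hy: "h y \<ge> h q - K * r" using K y r1 r_def by blast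
    have uy: "u \<bullet> y \<ge> u \<bullet> q - norm u * r"
    proof -
      have "u \<bullet> (q - y) \<le> norm u * norm (q - y)" by (rule norm_cauchy_schwarz)
      thus ?thesis by (simp add: r_def norm_minus_commute inner_diff_right)
    qed
    have "norm (y - x) \<ge> r - d"
      using norm_triangle_ineq4[of "y - x" "q - x"] by (simp add: r_def d_def)
    moreover have rd: "r - d > 1 + (B + C + B * d) / A" using y r_def R_def by simp
    moreover have "(B + C + B * d) / A \<ge> 0" using A0 B0 C0 d0 by (intro divide_nonneg_pos add_nonneg_nonneg mult_nonneg_nonneg) auto
    hence "r - d \<ge> 0" using rd by linarith
    ultimately have "norm (y - x)^2 \<ge> (r - d)^2" by (intro power_mono) auto
    hence "c^2 * norm (y - x)^2 \<ge> c^2 * (r - d)^2" by (intro mult_left_mono) auto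
    hence "Vdiv vt dvt x0 x y \<ge> c^2 * (r - d)^2 / 2" using Vlow[of y] by (simp add: power_mult_distrib)
    hence "\<beta> * Vdiv vt dvt x0 x y \<ge> \<beta> * (c^2 * (r - d)^2 / 2)" using \<beta> by (intro mult_left_mono) auto
    hence "\<beta> * Vdiv vt dvt x0 x y \<ge> A * (r - d)^2" unfolding A_def by simp
    moreover have "A * (r - d)^2 > B * ((r - d) + d) + C" by (rule quad_grow[OF A0 B0 C0 d0 rd])
    ultimately show ?thesis using hy uy unfolding F_def C_def B_def by (simp add: algebra_simps)
  qed
  have cpt: "compact (X \<inter> cball q R)" using closed_Int_compact[OF X(2) compact_cball] .
  have ne: "X \<inter> cball q R \<noteq> {}" using q R1 by auto
  obtain p where p: "p \<in> X \<inter> cball q R" "\<forall>z\<in>X \<inter> cball q R. F p \<le> F z"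
    using continuous_attains_inf[OF cpt ne continuous_on_subset[OF Fc]] by blast
  have "F p \<le> F z" if z: "z \<in> X" for z
  proof (cases "z \<in> cball q R")
    case True thus ?thesis using p z by blast
  next
    case False
    hence "norm (z - q) > R" by (simp add: dist_norm norm_minus_commute)
    hence "F z > F q" using far z by blast
    moreover have "F p \<le> F q" using p q R1 by auto
    ultimately show ?thesis by simp
  qed
  thus ?thesis using p unfolding F_def by blast
qed

lemma prox_spec:
  fixes X :: "'a::euclidean_space set"
  assumes norm: "is_norm nrm"
    and X: "convex X" "closed X" and q: "q \<in> X"
    and vt_diff: "\<And>x. (vt has_derivative (\<lambda>v. dvt x \<bullet> v)) (at x)"
    and vt_strong: "\<And>x x'. (dvt x - dvt x') \<bullet> (x - x') \<ge> (nrm (x - x'))\<^sup>2"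
    and h_convex: "convex_on X h" and h_cont: "continuous_on X h"
    and \<beta>: "\<beta> > 0"
  shows "prox X h vt dvt x0 \<beta> u x \<in> X"
    "\<And>z. z \<in> X \<Longrightarrow> u \<bullet> (prox X h vt dvt x0 \<beta> u x - z) + h (prox X h vt dvt x0 \<beta> u x) - h z
       \<le> \<beta> * (Vdiv vt dvt x0 x z - Vdiv vt dvt x0 (prox X h vt dvt x0 \<beta> u x) z
              - Vdiv vt dvt x0 x (prox X h vt dvt x0 \<beta> u x))"
proof -
  have ex: "\<exists>p. p \<in> X \<and> (\<forall>z\<in>X. u \<bullet> p + h p + \<beta> * Vdiv vt dvt x0 x p \<le> u \<bullet> z + h z + \<beta> * Vdiv vt dvt x0 x z)"
    using prox_exists[OF assms] by blast
  have P: "prox X h vt dvt x0 \<beta> u x \<in> X \<and> (\<forall>z\<in>X. u \<bullet> prox X h vt dvt x0 \<beta> u x + h (prox X h vt dvt x0 \<beta> u x)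
     + \<beta> * Vdiv vt dvt x0 x (prox X h vt dvt x0 \<beta> u x) \<le> u \<bullet> z + h z + \<beta> * Vdiv vt dvt x0 x z)"
    unfolding prox_def by (rule someI_ex[OF ex])
  show "prox X h vt dvt x0 \<beta> u x \<in> X" using P by blast
  show "u \<bullet> (prox X h vt dvt x0 \<beta> u x - z) + h (prox X h vt dvt x0 \<beta> u x) - h z
       \<le> \<beta> * (Vdiv vt dvt x0 x z - Vdiv vt dvt x0 (prox X h vt dvt x0 \<beta> u x) z
              - Vdiv vt dvt x0 x (prox X h vt dvt x0 \<beta> u x))" if "z \<in> X" for z
    by (rule prox_vi[OF X(1) vt_diff h_convex \<beta>]) (use P that in auto)
qed

lemma prox0_lip:
  fixes X :: "'a::euclidean_space set"
  assumes norm: "is_norm nrm"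
    and X: "convex X" "closed X" and q: "q \<in> X"
    and vt_diff: "\<And>x. (vt has_derivative (\<lambda>v. dvt x \<bullet> v)) (at x)"
    and vt_strong: "\<And>x x'. (dvt x - dvt x') \<bullet> (x - x') \<ge> (nrm (x - x'))\<^sup>2"
    and c: "c > 0" "\<forall>x. nrm x \<ge> c * norm x"
  shows "c^2 * norm (prox X (\<lambda>_. 0) vt dvt x0 1 u' x' - prox X (\<lambda>_. 0) vt dvt x0 1 u x)
           \<le> norm (u - u') + norm (dvt (x - x0) - dvt (x' - x0))"
proof -
  let ?P = "\<lambda>u x. prox X (\<lambda>_. 0) vt dvt x0 1 u x"
  define p where "p = ?P u x"
  define p' where "p' = ?P u' x'"
  define a where "a w = dvt (w - x0)" for w
  have hc: "convex_on X (\<lambda>_. 0::real)" using X(1) by (simp add: convex_on_const)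
  have hcc: "continuous_on X (\<lambda>_. 0::real)" by simp
  note sp = prox_spec[OF norm X q vt_diff vt_strong hc hcc, of 1, simplified]
  have pX: "p \<in> X" "p' \<in> X" using sp(1) p_def p'_def by auto
  have sp2: "u \<bullet> (?P u x - z) \<le> Vdiv vt dvt x0 x z - Vdiv vt dvt x0 (?P u x) z - Vdiv vt dvt x0 x (?P u x)"
    if "z \<in> X" for u x z using sp(2)[OF that] by simp
  have i1: "u \<bullet> (p - p') \<le> (a p - a x) \<bullet> (p' - p)"
    using sp2[OF pX(2), of u x] three_point[of dvt p x0 x p' vt] unfolding p_def a_def by simp
  have i2: "u' \<bullet> (p' - p) \<le> (a p' - a x') \<bullet> (p - p')"
    using sp2[OF pX(1), of u' x'] three_point[of dvt p' x0 x' p vt] unfolding p'_def a_def by simp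
  have "(a p' - a p) \<bullet> (p' - p) \<le> (a x' - a x + u - u') \<bullet> (p' - p)"
    using i1 i2 by (simp add: inner_diff_left inner_diff_right inner_add_left algebra_simps)
  also have "\<dots> \<le> norm (a x' - a x + u - u') * norm (p' - p)" by (rule norm_cauchy_schwarz)
  also have "\<dots> \<le> (norm (u - u') + norm (a x - a x')) * norm (p' - p)"
  proof (rule mult_right_mono)
    have "norm (a x' - a x + u - u') \<le> norm (a x' - a x) + norm (u - u')"
      using norm_triangle_ineq[of "a x' - a x" "u - u'"] by (simp add: algebra_simps)
    thus "norm (a x' - a x + u - u') \<le> norm (u - u') + norm (a x - a x')" by (simp add: norm_minus_commute)
  qed simp
  finally have up: "(a p' - a p) \<bullet> (p' - p) \<le> (norm (u - u') + norm (a x - a x')) * norm (p' - p)" .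
  have "(a p' - a p) \<bullet> (p' - p) \<ge> (nrm (p' - p))^2"
    using vt_strong[of "p' - x0" "p - x0"] unfolding a_def by simp
  moreover have "(nrm (p' - p))^2 \<ge> (c * norm (p' - p))^2" using c by (intro power_mono) auto
  ultimately have "c^2 * norm (p' - p) * norm (p' - p) \<le> (norm (u - u') + norm (a x - a x')) * norm (p' - p)"
    using up by (simp add: power2_eq_square algebra_simps)
  hence "c^2 * norm (p' - p) \<le> norm (u - u') + norm (a x - a x')"
  proof (cases "norm (p' - p) = 0")
    case True thus ?thesis by simp
  next
    case False hence "norm (p' - p) > 0" by simp
    thus ?thesis using \<open>c^2 * norm (p' - p) * norm (p' - p) \<le> _\<close> by simp
  qed
  thus ?thesis unfolding p_def p'_def a_def .
qed

lemma prox0_cont: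
  fixes X :: "'a::euclidean_space set"
  assumes norm: "is_norm nrm"
    and X: "convex X" "closed X" and q: "q \<in> X"
    and vt_diff: "\<And>x. (vt has_derivative (\<lambda>v. dvt x \<bullet> v)) (at x)"
    and vt_C1: "continuous_on UNIV dvt"
    and vt_strong: "\<And>x x'. (dvt x - dvt x') \<bullet> (x - x') \<ge> (nrm (x - x'))\<^sup>2"
  shows "continuous_on UNIV (\<lambda>w::'a \<times> 'a. prox X (\<lambda>_. 0) vt dvt x0 1 (- (b *\<^sub>R fst w)) (snd w))"
proof -
  obtain c where c: "c > 0" "\<forall>x. nrm x \<ge> c * norm x" using nrm_equiv[OF norm] by blast
  let ?f = "\<lambda>w::'a \<times> 'a. prox X (\<lambda>_. 0) vt dvt x0 1 (- (b *\<^sub>R fst w)) (snd w)"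
  have dc: "isCont dvt y" for y using vt_C1 continuous_on_eq_continuous_at by blast
  have "isCont ?f w0" for w0
  proof -
    define g where "g w = (norm (- (b *\<^sub>R fst w0) - - (b *\<^sub>R fst w)) + norm (dvt (snd w0 - x0) - dvt (snd w - x0))) / c^2" for w
    have gc: "isCont g w0" unfolding g_def
      by (intro continuous_intros continuous_at_compose[OF _ dc, unfolded o_def]) (use c in auto)
    hence "(g \<longlongrightarrow> g w0) (at w0)" by (simp add: isCont_def)
    hence g0: "(g \<longlongrightarrow> 0) (at w0)" by (simp add: g_def)
    have "norm (?f w - ?f w0) \<le> g w" for w
    proof -
      have "c^2 * norm (?f w - ?f w0) \<le> norm (- (b *\<^sub>R fst w0) - - (b *\<^sub>R fst w)) + norm (dvt (snd w0 - x0) - dvt (snd w - x0))"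
        by (rule prox0_lip[OF norm X q vt_diff vt_strong c])
      thus ?thesis unfolding g_def using c(1) by (simp add: field_simps)
    qed
    hence "((\<lambda>w. ?f w - ?f w0) \<longlongrightarrow> 0) (at w0)"
      by (intro Lim_null_comparison[OF _ g0]) auto
    thus ?thesis unfolding isCont_def by (simp add: LIM_zero_iff)
  qed
  thus ?thesis by (simp add: continuous_at_imp_continuous_on)
qed

primrec zrec :: "'a::real_inner set \<Rightarrow> ('a \<Rightarrow> real) \<Rightarrow> ('a \<Rightarrow> 'a) \<Rightarrow> 'a \<Rightarrow> (nat \<Rightarrow> real)
    \<Rightarrow> (nat \<Rightarrow> 'a) \<Rightarrow> nat \<Rightarrow> 'a" where
  "zrec X vt dvt x0 \<beta> \<zeta> 0 = x0"
| "zrec X vt dvt x0 \<beta> \<zeta> (Suc i) =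
     prox X (\<lambda>_. 0) vt dvt x0 1 (- (inverse (\<beta> i) *\<^sub>R \<zeta> (Suc i))) (zrec X vt dvt x0 \<beta> \<zeta> i)"

lemma zrec_dep:
  "(\<And>j. j \<in> {1..i} \<Longrightarrow> \<zeta> j = \<zeta>' j) \<Longrightarrow> zrec X vt dvt x0 \<beta> \<zeta> i = zrec X vt dvt x0 \<beta> \<zeta>' i"
proof (induction i)
  case 0 thus ?case by simp
next
  case (Suc i)
  have "zrec X vt dvt x0 \<beta> \<zeta> i = zrec X vt dvt x0 \<beta> \<zeta>' i" using Suc by auto
  moreover have "\<zeta> (Suc i) = \<zeta>' (Suc i)" using Suc by auto
  ultimately show ?case by simp
qed

lemma zrec_restrict: "zrec X vt dvt x0 \<beta> \<zeta> i = zrec X vt dvt x0 \<beta> (restrict \<zeta> {1..i}) i"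
  by (rule zrec_dep) simp

lemma zrec_meas:
  fixes X :: "'a::euclidean_space set"
  assumes norm: "is_norm nrm"
    and X: "convex X" "closed X" and q: "q \<in> X"
    and vt_diff: "\<And>x. (vt has_derivative (\<lambda>v. dvt x \<bullet> v)) (at x)"
    and vt_C1: "continuous_on UNIV dvt"
    and vt_strong: "\<And>x x'. (dvt x - dvt x') \<bullet> (x - x') \<ge> (nrm (x - x'))\<^sup>2"
  shows "{1..i} \<subseteq> I \<Longrightarrow> (\<lambda>\<zeta>. zrec X vt dvt x0 \<beta> \<zeta> i) \<in> borel_measurable (PiM I (\<lambda>_. borel))"
proof (induction i)
  case 0 thus ?case by simp
next
  case (Suc i)
  have "{1..i} \<subseteq> {1..Suc i}" by auto
  hence IH: "(\<lambda>\<zeta>. zrec X vt dvt x0 \<beta> \<zeta> i) \<in> borel_measurable (PiM I (\<lambda>_. borel))"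
    using Suc by blast
  have c: "(\<lambda>\<zeta>. \<zeta> (Suc i)) \<in> borel_measurable (PiM I (\<lambda>_. borel))"
  proof -
    have "Suc i \<in> I" using Suc.prems by auto
    from measurable_component_singleton[OF this, of "\<lambda>_. borel"] show ?thesis by simp
  qed
  have H: "continuous_on UNIV (\<lambda>w::'a \<times> 'a. (\<lambda>s y. prox X (\<lambda>_. 0) vt dvt x0 1 (- (inverse (\<beta> i) *\<^sub>R s)) y) (fst w) (snd w))"
    using prox0_cont[OF norm X q vt_diff vt_C1 vt_strong, of x0 "inverse (\<beta> i)"] by simp
  show ?case using borel_measurable_continuous_Pair[OF c IH H] by simp
qed

lemma zrec_in:
  fixes X :: "'a::euclidean_space set"
  assumes norm: "is_norm nrm"
    and X: "convex X" "closed X" and q: "x0 \<in> X"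
    and vt_diff: "\<And>x. (vt has_derivative (\<lambda>v. dvt x \<bullet> v)) (at x)"
    and vt_strong: "\<And>x x'. (dvt x - dvt x') \<bullet> (x - x') \<ge> (nrm (x - x'))\<^sup>2"
  shows "zrec X vt dvt x0 \<beta> \<zeta> i \<in> X"
proof (cases i)
  case 0 thus ?thesis using q by simp
next
  case (Suc j)
  have hc: "convex_on X (\<lambda>_. 0::real)" using X(1) by (simp add: convex_on_const)
  show ?thesis using Suc prox_spec(1)[OF norm X q vt_diff vt_strong hc continuous_on_const, of 1] by simp
qed

lemma telesc: fixes a :: "nat \<Rightarrow> real" shows "(\<Sum>i=1..N. (a (i - 1) - a i)) = a 0 - a N"
  by (induction N) auto

lemma V_nonneg:
  fixes nrm :: "'a::euclidean_space \<Rightarrow> real"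
  assumes norm: "is_norm nrm"
    and vt_diff: "\<And>x. (vt has_derivative (\<lambda>v. dvt x \<bullet> v)) (at x)"
    and vt_strong: "\<And>x x'. (dvt x - dvt x') \<bullet> (x - x') \<ge> (nrm (x - x'))\<^sup>2"
  shows "Vdiv vt dvt x0 x y \<ge> (nrm (y - x))\<^sup>2 / 2" "Vdiv vt dvt x0 x y \<ge> 0"
proof -
  show "Vdiv vt dvt x0 x y \<ge> (nrm (y - x))\<^sup>2 / 2"
    unfolding Vdiv_def using vt_strong_conv[OF norm vt_diff vt_strong, of "y - x0" "x - x0"] by simp
  thus "Vdiv vt dvt x0 x y \<ge> 0" using zero_le_power2[of "nrm (y - x)"] by linarith
qed

lemma step_aux:
  fixes X :: "'a::euclidean_space set"
  assumes norm: "is_norm nrm"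
    and X: "convex X" "closed X" and q: "q \<in> X"
    and vt_diff: "\<And>x. (vt has_derivative (\<lambda>v. dvt x \<bullet> v)) (at x)"
    and vt_strong: "\<And>x x'. (dvt x - dvt x') \<bullet> (x - x') \<ge> (nrm (x - x'))\<^sup>2"
    and b: "b > 0" and z: "z \<in> X"
    and zn: "zn = prox X (\<lambda>_. 0) vt dvt x0 1 (- (inverse b *\<^sub>R \<zeta>)) zp"
  shows "(\<zeta> \<bullet> (z - zp)) / b \<le> Vdiv vt dvt x0 zp z - Vdiv vt dvt x0 zn z
           + (dual_norm nrm \<zeta>)\<^sup>2 / (2 * b\<^sup>2)"
proof -
  have hc: "convex_on X (\<lambda>_. 0::real)" using X(1) by (simp add: convex_on_const)
  have vi: "(- (inverse b *\<^sub>R \<zeta>)) \<bullet> (zn - z) \<le> Vdiv vt dvt x0 zp z - Vdiv vt dvt x0 zn z - Vdiv vt dvt x0 zp zn"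
  proof -
    note sp = prox_spec[OF norm X q vt_diff vt_strong hc continuous_on_const, of 1, simplified]
    have sp2: "u \<bullet> (prox X (\<lambda>_. 0) vt dvt x0 1 u x - z) \<le> Vdiv vt dvt x0 x z
       - Vdiv vt dvt x0 (prox X (\<lambda>_. 0) vt dvt x0 1 u x) z - Vdiv vt dvt x0 x (prox X (\<lambda>_. 0) vt dvt x0 1 u x)"
      for u x using sp(2)[OF z] by simp
    show ?thesis unfolding zn by (rule sp2)
  qed
  define e where "e = nrm (zn - zp)"
  define D where "D = dual_norm nrm \<zeta>"
  have ve: "Vdiv vt dvt x0 zp zn \<ge> e^2 / 2" using V_nonneg(1)[OF norm vt_diff vt_strong] e_def by blast
  have de: "\<zeta> \<bullet> (zn - zp) \<le> D * e" using dual_norm_le(1)[OF norm] D_def e_def by blast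
  have "(\<zeta> \<bullet> (z - zp)) / b = (\<zeta> \<bullet> (z - zn)) / b + (\<zeta> \<bullet> (zn - zp)) / b"
    by (simp add: inner_diff_right add_divide_distrib[symmetric])
  also have "(\<zeta> \<bullet> (z - zn)) / b = (- (inverse b *\<^sub>R \<zeta>)) \<bullet> (zn - z)"
    by (simp add: inner_diff_right divide_inverse algebra_simps)
  finally have "(\<zeta> \<bullet> (z - zp)) / b \<le> Vdiv vt dvt x0 zp z - Vdiv vt dvt x0 zn z - e^2/2 + D * e / b"
    using vi ve de b by (smt (verit) divide_right_mono)
  moreover have "D * e / b - e^2 / 2 \<le> D^2 / (2 * b^2)"
  proof -
    have "0 \<le> (D / b - e)^2" by simp
    also have "(D / b - e)^2 = D^2 / b^2 - 2 * (D * e / b) + e^2"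
      by (simp add: power2_diff power_divide)
    finally have "0 \<le> D^2 / b^2 - 2 * (D * e / b) + e^2" .
    moreover have "D^2 / (2 * b^2) = (D^2 / b^2) / 2" by simp
    ultimately show ?thesis by linarith
  qed
  ultimately show ?thesis unfolding D_def by linarith
qed

lemma step_main:
  fixes X :: "'a::euclidean_space set"
  assumes norm: "is_norm nrm"
    and X: "convex X" "closed X"
    and g_convex: "convex_on X g"
    and g_diff: "\<And>x. x \<in> X \<Longrightarrow> (g has_derivative (\<lambda>v. dg x \<bullet> v)) (at x within X)"
    and g_lip: "\<And>x x'. x \<in> X \<Longrightarrow> x' \<in> X \<Longrightarrow> dual_norm nrm (dg x - dg x') \<le> L * nrm (x - x')"
    and vt_diff: "\<And>x. (vt has_derivative (\<lambda>v. dvt x \<bullet> v)) (at x)"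
    and vt_strong: "\<And>x x'. (dvt x - dvt x') \<bullet> (x - x') \<ge> (nrm (x - x'))\<^sup>2"
    and h_convex: "convex_on X h" and h_cont: "continuous_on X h"
    and b: "b > 0" "b \<ge> 2 * L" and xp: "xp \<in> X" and z: "z \<in> X"
    and xn: "xn = prox X h vt dvt x0 b (dg xp + \<zeta>) xp"
  shows "xn \<in> X"
    "inverse b * ((g xn + h xn) - (g z + h z)) \<le> Vdiv vt dvt x0 xp z - Vdiv vt dvt x0 xn z
       + (\<zeta> \<bullet> (z - xp)) / b + (dual_norm nrm \<zeta>)\<^sup>2 / b\<^sup>2"
proof -
  note sp = prox_spec[OF norm X xp vt_diff vt_strong h_convex h_cont b(1)]
  show xnX: "xn \<in> X" using sp(1) xn by simp
  have vi: "(dg xp + \<zeta>) \<bullet> (xn - z) + h xn - h z \<le> b * (Vdiv vt dvt x0 xp z - Vdiv vt dvt x0 xn z - Vdiv vt dvt x0 xp xn)"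
    unfolding xn by (rule sp(2)[OF z])
  define n where "n = nrm (xn - xp)"
  define D where "D = dual_norm nrm \<zeta>"
  define Vp where "Vp = Vdiv vt dvt x0 xp z"
  define Vn where "Vn = Vdiv vt dvt x0 xn z"
  have ds: "g xn \<le> g xp + dg xp \<bullet> (xn - xp) + L / 2 * n^2"
    using descent[OF norm X(1) g_diff g_lip xp xnX] n_def by simp
  have gi: "g z \<ge> g xp + dg xp \<bullet> (z - xp)" using grad_ineq[OF X(1) g_diff g_convex xp z] .
  have ve: "Vdiv vt dvt x0 xp xn \<ge> n^2 / 2" using V_nonneg(1)[OF norm vt_diff vt_strong] n_def by blast
  have de: "\<zeta> \<bullet> (xp - xn) \<le> D * n"
    using dual_norm_le(1)[OF norm, of \<zeta> "xp - xn"] nrm_basic(4)[OF norm, of xp xn] D_def n_def by simp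
  have e1: "dg xp \<bullet> (xn - xp) - dg xp \<bullet> (z - xp) = dg xp \<bullet> (xn - z)" by (simp add: inner_diff_right)
  have e2: "\<zeta> \<bullet> (z - xp) + \<zeta> \<bullet> (xp - xn) = - (\<zeta> \<bullet> (xn - z))" by (simp add: inner_diff_right)
  have e3: "(dg xp + \<zeta>) \<bullet> (xn - z) = dg xp \<bullet> (xn - z) + \<zeta> \<bullet> (xn - z)" by (simp add: inner_add_left)
  have bn: "b * (n^2 / 2) \<le> b * Vdiv vt dvt x0 xp xn" using ve b by simp
  have Ln: "L / 2 * n^2 \<le> b / 4 * n^2" using b by (intro mult_right_mono) auto
  have q: "D * n - b / 4 * n^2 \<le> D^2 / b"
  proof -
    have "0 \<le> (D - b / 2 * n)^2" by simp
    also have "\<dots> = D^2 - b * (D * n - b / 4 * n^2)" by (simp add: power2_diff power2_eq_square algebra_simps)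
    finally have "b * (D * n - b / 4 * n^2) \<le> D^2" by simp
    thus ?thesis using b by (simp add: field_simps)
  qed
  have key: "(g xn + h xn) - (g z + h z) \<le> b * (Vp - Vn) + \<zeta> \<bullet> (z - xp) + D^2 / b"
    using vi ds gi bn Ln q de e1 e2 e3 unfolding Vp_def Vn_def by (simp add: algebra_simps)
  hence "inverse b * ((g xn + h xn) - (g z + h z)) \<le> inverse b * (b * (Vp - Vn) + \<zeta> \<bullet> (z - xp) + D^2 / b)"
    using b by (intro mult_left_mono) auto
  also have "\<dots> = Vp - Vn + (\<zeta> \<bullet> (z - xp)) / b + D^2 / b^2"
    using b by (simp add: field_simps power2_eq_square)
  finally show "inverse b * ((g xn + h xn) - (g z + h z)) \<le> Vdiv vt dvt x0 xp z - Vdiv vt dvt x0 xn z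
       + (\<zeta> \<bullet> (z - xp)) / b + (dual_norm nrm \<zeta>)\<^sup>2 / b\<^sup>2"
    unfolding Vp_def Vn_def D_def .
qed

lemma main_ineqs:
  fixes X :: "'a::euclidean_space set"
  assumes norm: "is_norm nrm"
    and X: "convex X" "closed X"
    and g_convex: "convex_on X g"
    and g_diff: "\<And>x. x \<in> X \<Longrightarrow> (g has_derivative (\<lambda>v. dg x \<bullet> v)) (at x within X)"
    and g_lip: "\<And>x x'. x \<in> X \<Longrightarrow> x' \<in> X \<Longrightarrow> dual_norm nrm (dg x - dg x') \<le> L * nrm (x - x')"
    and vt_diff: "\<And>x. (vt has_derivative (\<lambda>v. dvt x \<bullet> v)) (at x)"
    and vt_strong: "\<And>x x'. (dvt x - dvt x') \<bullet> (x - x') \<ge> (nrm (x - x'))\<^sup>2"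
    and h_convex: "convex_on X h" and h_cont: "continuous_on X h"
    and x0: "x0 \<in> X"
    and \<beta>_pos: "\<And>i. \<beta> i > 0"
    and \<beta>_ge: "\<And>i. \<beta> i \<ge> 2 * L"
    and N: "N \<ge> 1"
    and x_0: "x 0 = x0"
    and x_S: "\<And>k. x (Suc k) = prox X h vt dvt x0 (\<beta> k) (dg (x k) + \<zeta> (Suc k)) (x k)"
  shows "let f = (\<lambda>y. g y + h y);
                  V = Vdiv vt dvt x0;
                  S = (\<Sum>i=1..N. inverse (\<beta> (i - 1)));
                  xhat = inverse S *\<^sub>R (\<Sum>i=1..N. inverse (\<beta> (i - 1)) *\<^sub>R x i)
              in \<forall>z\<in>X.
                 S * (f xhat - f z) \<le> (\<Sum>i=1..N. inverse (\<beta> (i - 1)) * (f (x i) - f z))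
               \<and> (\<Sum>i=1..N. inverse (\<beta> (i - 1)) * (f (x i) - f z))
                   \<le> V x0 z - V (x N) z
                      + (\<Sum>i=1..N. (\<zeta> i \<bullet> (z - x (i - 1))) / \<beta> (i - 1)
                                   + (dual_norm nrm (\<zeta> i))\<^sup>2 / (\<beta> (i - 1))\<^sup>2)
               \<and> V x0 z - V (x N) z
                      + (\<Sum>i=1..N. (\<zeta> i \<bullet> (z - x (i - 1))) / \<beta> (i - 1)
                                   + (dual_norm nrm (\<zeta> i))\<^sup>2 / (\<beta> (i - 1))\<^sup>2)
                   \<le> 2 * V x0 z
                      + (\<Sum>i=1..N. (\<zeta> i \<bullet> (zrec X vt dvt x0 \<beta> \<zeta> (i - 1) - x (i - 1))) / \<beta> (i - 1)
                                   + 3 / 2 * (dual_norm nrm (\<zeta> i))\<^sup>2 / (\<beta> (i - 1))\<^sup>2)"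
  unfolding Let_def
proof (intro ballI)
  fix z assume z: "z \<in> X"
  define w where "w i = inverse (\<beta> (i - 1))" for i
  define V where "V a = Vdiv vt dvt x0 a z" for a
  define D where "D i = dual_norm nrm (\<zeta> i)" for i
  define f where "f y = g y + h y" for y
  define zz where "zz i = zrec X vt dvt x0 \<beta> \<zeta> i" for i
  define S where "S = (\<Sum>i=1..N. w i)"
  have xX: "x k \<in> X" for k
  proof (induction k)
    case 0 thus ?case using x0 x_0 by simp
  next
    case (Suc k) thus ?case
      using prox_spec(1)[OF norm X Suc.IH vt_diff vt_strong h_convex h_cont \<beta>_pos] x_S by simp
  qed
  have step: "w i * (f (x i) - f z) \<le> V (x (i - 1)) - V (x i) + (\<zeta> i \<bullet> (z - x (i - 1))) / \<beta> (i - 1)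
      + (D i)^2 / (\<beta> (i - 1))^2" if iN: "i \<in> {1..N}" for i
  proof -
    obtain k where k: "i = Suc k" using iN by (cases i) auto
    show ?thesis unfolding k w_def V_def D_def f_def
      using step_main(2)[OF norm X g_convex g_diff g_lip vt_diff vt_strong h_convex h_cont \<beta>_pos \<beta>_ge xX z x_S] by simp
  qed
  have aux: "(\<zeta> i \<bullet> (z - zz (i - 1))) / \<beta> (i - 1) \<le> V (zz (i - 1)) - V (zz i) + (D i)^2 / (2 * (\<beta> (i - 1))^2)"
    if iN: "i \<in> {1..N}" for i
  proof -
    obtain k where k: "i = Suc k" using iN by (cases i) auto
    show ?thesis unfolding k V_def D_def zz_def
      using step_aux[OF norm X x0 vt_diff vt_strong \<beta>_pos z] by simp
  qed
  have Spos: "S > 0" unfolding S_def w_def using N \<beta>_pos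
    by (intro sum_pos) auto
  have I1: "S * (f (inverse S *\<^sub>R (\<Sum>i=1..N. w i *\<^sub>R x i)) - f z) \<le> (\<Sum>i=1..N. w i * (f (x i) - f z))"
  proof -
    have fc: "convex_on X f" unfolding f_def[abs_def] using g_convex h_convex by (rule convex_on_add)
    have sa: "(\<Sum>i=1..N. inverse S * w i) = 1" using Spos by (simp add: S_def sum_distrib_left[symmetric])
    have eq: "inverse S *\<^sub>R (\<Sum>i=1..N. w i *\<^sub>R x i) = (\<Sum>i=1..N. (inverse S * w i) *\<^sub>R x i)"
      by (simp add: scaleR_sum_right)
    have "f (\<Sum>i=1..N. (inverse S * w i) *\<^sub>R x i) \<le> (\<Sum>i=1..N. (inverse S * w i) * f (x i))"
      using N Spos \<beta>_pos by (intro convex_on_sum[OF _ _ fc sa]) (auto simp: w_def xX intro!: mult_nonneg_nonneg less_imp_le)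
    hence "S * f (inverse S *\<^sub>R (\<Sum>i=1..N. w i *\<^sub>R x i)) \<le> S * (\<Sum>i=1..N. (inverse S * w i) * f (x i))"
      using Spos eq by simp
    also have "\<dots> = (\<Sum>i=1..N. w i * f (x i))" using Spos by (simp add: sum_distrib_left mult.assoc[symmetric])
    finally have a: "S * f (inverse S *\<^sub>R (\<Sum>i=1..N. w i *\<^sub>R x i)) \<le> (\<Sum>i=1..N. w i * f (x i))" .
    have b: "(\<Sum>i=1..N. w i * (f (x i) - f z)) = (\<Sum>i=1..N. w i * f (x i)) - S * f z"
      by (simp add: S_def right_diff_distrib sum_subtractf sum_distrib_right)
    show ?thesis using a b by (simp add: right_diff_distrib)
  qed
  have I2: "(\<Sum>i=1..N. w i * (f (x i) - f z)) \<le> V x0 - V (x N)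
      + (\<Sum>i=1..N. (\<zeta> i \<bullet> (z - x (i - 1))) / \<beta> (i - 1) + (D i)^2 / (\<beta> (i - 1))^2)"
  proof -
    have "(\<Sum>i=1..N. w i * (f (x i) - f z)) \<le> (\<Sum>i=1..N. (V (x (i - 1)) - V (x i))
        + ((\<zeta> i \<bullet> (z - x (i - 1))) / \<beta> (i - 1) + (D i)^2 / (\<beta> (i - 1))^2))"
      using step by (intro sum_mono) (simp add: algebra_simps)
    also have "\<dots> = (\<Sum>i=1..N. V (x (i - 1)) - V (x i))
        + (\<Sum>i=1..N. (\<zeta> i \<bullet> (z - x (i - 1))) / \<beta> (i - 1) + (D i)^2 / (\<beta> (i - 1))^2)"
      by (rule sum.distrib)
    also have "(\<Sum>i=1..N. V (x (i - 1)) - V (x i)) = V x0 - V (x N)"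
      using telesc[of "\<lambda>i. V (x i)" N] x_0 by simp
    finally show ?thesis .
  qed
  have I3: "V x0 - V (x N)
      + (\<Sum>i=1..N. (\<zeta> i \<bullet> (z - x (i - 1))) / \<beta> (i - 1) + (D i)^2 / (\<beta> (i - 1))^2)
      \<le> 2 * V x0 + (\<Sum>i=1..N. (\<zeta> i \<bullet> (zz (i - 1) - x (i - 1))) / \<beta> (i - 1)
            + 3 / 2 * (D i)^2 / (\<beta> (i - 1))^2)"
  proof -
    have T: "(\<Sum>i=1..N. (\<zeta> i \<bullet> (z - zz (i - 1))) / \<beta> (i - 1))
        \<le> V x0 - V (zz N) + (\<Sum>i=1..N. (D i)^2 / (2 * (\<beta> (i - 1))^2))"
    proof -
      have "(\<Sum>i=1..N. (\<zeta> i \<bullet> (z - zz (i - 1))) / \<beta> (i - 1))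
          \<le> (\<Sum>i=1..N. (V (zz (i - 1)) - V (zz i)) + (D i)^2 / (2 * (\<beta> (i - 1))^2))"
        using aux by (intro sum_mono) simp
      also have "\<dots> = (\<Sum>i=1..N. V (zz (i - 1)) - V (zz i)) + (\<Sum>i=1..N. (D i)^2 / (2 * (\<beta> (i - 1))^2))"
        by (rule sum.distrib)
      also have "(\<Sum>i=1..N. V (zz (i - 1)) - V (zz i)) = V x0 - V (zz N)"
        using telesc[of "\<lambda>i. V (zz i)" N] by (simp add: zz_def)
      finally show ?thesis .
    qed
    have termw: "(\<zeta> i \<bullet> (z - x (i - 1))) / \<beta> (i - 1) + (D i)^2 / (\<beta> (i - 1))^2
        = (\<zeta> i \<bullet> (z - zz (i - 1))) / \<beta> (i - 1)
          + ((\<zeta> i \<bullet> (zz (i - 1) - x (i - 1))) / \<beta> (i - 1) + 3 / 2 * (D i)^2 / (\<beta> (i - 1))^2)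
          - (D i)^2 / (2 * (\<beta> (i - 1))^2)" for i
    proof -
      have "\<zeta> i \<bullet> (z - x (i - 1)) = \<zeta> i \<bullet> (z - zz (i - 1)) + \<zeta> i \<bullet> (zz (i - 1) - x (i - 1))"
        by (simp add: inner_diff_right)
      hence a: "(\<zeta> i \<bullet> (z - x (i - 1))) / \<beta> (i - 1) = (\<zeta> i \<bullet> (z - zz (i - 1))) / \<beta> (i - 1)
           + (\<zeta> i \<bullet> (zz (i - 1) - x (i - 1))) / \<beta> (i - 1)" by (simp add: add_divide_distrib)
      have b: "(D i)^2 / (\<beta> (i - 1))^2 = 3 / 2 * (D i)^2 / (\<beta> (i - 1))^2 - (D i)^2 / (2 * (\<beta> (i - 1))^2)"
        by (simp add: field_simps)
      show ?thesis using a b by simp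
    qed
    have "(\<Sum>i=1..N. (\<zeta> i \<bullet> (z - x (i - 1))) / \<beta> (i - 1) + (D i)^2 / (\<beta> (i - 1))^2)
        = (\<Sum>i=1..N. (\<zeta> i \<bullet> (z - zz (i - 1))) / \<beta> (i - 1))
          + (\<Sum>i=1..N. (\<zeta> i \<bullet> (zz (i - 1) - x (i - 1))) / \<beta> (i - 1) + 3 / 2 * (D i)^2 / (\<beta> (i - 1))^2)
          - (\<Sum>i=1..N. (D i)^2 / (2 * (\<beta> (i - 1))^2))"
      by (subst sum.cong[OF refl termw]) (simp only: sum.distrib sum_subtractf)
    moreover have "V (x N) \<ge> 0" "V (zz N) \<ge> 0" unfolding V_def using V_nonneg(2)[OF norm vt_diff vt_strong] by auto
    ultimately show ?thesis using T by linarith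
  qed
  show "(\<Sum>i=1..N. inverse (\<beta> (i - 1))) * (g (inverse (\<Sum>i=1..N. inverse (\<beta> (i - 1))) *\<^sub>R (\<Sum>i=1..N. inverse (\<beta> (i - 1)) *\<^sub>R x i)) + h (inverse (\<Sum>i=1..N. inverse (\<beta> (i - 1))) *\<^sub>R (\<Sum>i=1..N. inverse (\<beta> (i - 1)) *\<^sub>R x i)) - (g z + h z)) \<le> (\<Sum>i=1..N. inverse (\<beta> (i - 1)) * (g (x i) + h (x i) - (g z + h z)))
               \<and> (\<Sum>i=1..N. inverse (\<beta> (i - 1)) * (g (x i) + h (x i) - (g z + h z)))
                   \<le> Vdiv vt dvt x0 x0 z - Vdiv vt dvt x0 (x N) z
                      + (\<Sum>i=1..N. (\<zeta> i \<bullet> (z - x (i - 1))) / \<beta> (i - 1)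
                                   + (dual_norm nrm (\<zeta> i))\<^sup>2 / (\<beta> (i - 1))\<^sup>2)
               \<and> Vdiv vt dvt x0 x0 z - Vdiv vt dvt x0 (x N) z
                      + (\<Sum>i=1..N. (\<zeta> i \<bullet> (z - x (i - 1))) / \<beta> (i - 1)
                                   + (dual_norm nrm (\<zeta> i))\<^sup>2 / (\<beta> (i - 1))\<^sup>2)
                   \<le> 2 * Vdiv vt dvt x0 x0 z
                      + (\<Sum>i=1..N. (\<zeta> i \<bullet> (zrec X vt dvt x0 \<beta> \<zeta> (i - 1) - x (i - 1))) / \<beta> (i - 1)
                                   + 3 / 2 * (dual_norm nrm (\<zeta> i))\<^sup>2 / (\<beta> (i - 1))\<^sup>2)"
  proof (intro conjI)
    show "(\<Sum>i=1..N. inverse (\<beta> (i - 1))) * (g (inverse (\<Sum>i=1..N. inverse (\<beta> (i - 1))) *\<^sub>R (\<Sum>i=1..N. inverse (\<beta> (i - 1)) *\<^sub>R x i)) + h (inverse (\<Sum>i=1..N. inverse (\<beta> (i - 1))) *\<^sub>R (\<Sum>i=1..N. inverse (\<beta> (i - 1)) *\<^sub>R x i)) - (g z + h z)) \<le> (\<Sum>i=1..N. inverse (\<beta> (i - 1)) * (g (x i) + h (x i) - (g z + h z)))"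
      using I1 unfolding w_def f_def S_def .
    show "(\<Sum>i=1..N. inverse (\<beta> (i - 1)) * (g (x i) + h (x i) - (g z + h z)))
                   \<le> Vdiv vt dvt x0 x0 z - Vdiv vt dvt x0 (x N) z
                      + (\<Sum>i=1..N. (\<zeta> i \<bullet> (z - x (i - 1))) / \<beta> (i - 1)
                                   + (dual_norm nrm (\<zeta> i))\<^sup>2 / (\<beta> (i - 1))\<^sup>2)"
      using I2 unfolding w_def f_def V_def D_def .
    show "Vdiv vt dvt x0 x0 z - Vdiv vt dvt x0 (x N) z
                      + (\<Sum>i=1..N. (\<zeta> i \<bullet> (z - x (i - 1))) / \<beta> (i - 1)
                                   + (dual_norm nrm (\<zeta> i))\<^sup>2 / (\<beta> (i - 1))\<^sup>2)
                   \<le> 2 * Vdiv vt dvt x0 x0 z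
                      + (\<Sum>i=1..N. (\<zeta> i \<bullet> (zrec X vt dvt x0 \<beta> \<zeta> (i - 1) - x (i - 1))) / \<beta> (i - 1)
                                   + 3 / 2 * (dual_norm nrm (\<zeta> i))\<^sup>2 / (\<beta> (i - 1))\<^sup>2)"
      using I3 unfolding V_def D_def zz_def .
  qed
qed

theorem proposition5:
  fixes X :: "'a::euclidean_space set"
    and nrm :: "'a \<Rightarrow> real"
    and M :: "'w measure"
    and G :: "'a \<Rightarrow> 'w \<Rightarrow> real" and dG :: "'a \<Rightarrow> 'w \<Rightarrow> 'a"
    and g :: "'a \<Rightarrow> real" and dg :: "'a \<Rightarrow> 'a"
    and L :: real
    and vt :: "'a \<Rightarrow> real" and dvt :: "'a \<Rightarrow> 'a"
    and h :: "'a \<Rightarrow> real"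
    and x0 :: 'a and \<beta> :: "nat \<Rightarrow> real" and N :: nat
  assumes norm: "is_norm nrm"
    and X: "convex X" "closed X" "interior X \<noteq> {}"
    and M: "prob_space M"
    and G_diff: "\<And>x w. x \<in> X \<Longrightarrow> w \<in> space M \<Longrightarrow>
                   ((\<lambda>y. G y w) has_derivative (\<lambda>v. dG x w \<bullet> v)) (at x within X)"
    and G_int: "\<And>x. x \<in> X \<Longrightarrow> integrable M (G x)"
    and g_def: "\<And>x. x \<in> X \<Longrightarrow> g x = (\<integral>w. G x w \<partial>M)"
    and g_convex: "convex_on X g"
    and g_diff: "\<And>x. x \<in> X \<Longrightarrow> (g has_derivative (\<lambda>v. dg x \<bullet> v)) (at x within X)"
    and g_lip: "\<And>x x'. x \<in> X \<Longrightarrow> x' \<in> X \<Longrightarrow> dual_norm nrm (dg x - dg x') \<le> L * nrm (x - x')"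
    and vt_diff: "\<And>x. (vt has_derivative (\<lambda>v. dvt x \<bullet> v)) (at x)"
    and vt_C1: "continuous_on UNIV dvt"
    and vt_convex: "convex_on UNIV vt"
    and vt_strong: "\<And>x x'. (dvt x - dvt x') \<bullet> (x - x') \<ge> (nrm (x - x'))\<^sup>2"
    and vt_min: "\<And>x. vt x \<ge> vt 0" "vt 0 = 0"
    and h_convex: "convex_on X h" and h_cont: "continuous_on X h"
    and x0: "x0 \<in> X"
    and \<beta>_pos: "\<And>i. \<beta> i > 0"
    and \<beta>_ge: "\<And>i. \<beta> i \<ge> 2 * L"
    and N: "N \<ge> 1"
  shows "\<exists>Z :: nat \<Rightarrow> (nat \<Rightarrow> 'a) \<Rightarrow> 'a.
           (\<forall>\<zeta>. Z 0 \<zeta> = x0)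
         \<and> (\<forall>i<N. \<forall>\<zeta>. Z i \<zeta> \<in> X)
         \<and> (\<forall>i. \<forall>\<zeta>. Z i \<zeta> = Z i (restrict \<zeta> {1..i}))
         \<and> (\<forall>i. Z i \<in> borel_measurable (PiM {1..i} (\<lambda>_. borel)))
         \<and> (\<forall>\<omega> :: nat \<Rightarrow> 'w. (\<forall>i. \<omega> i \<in> space M) \<longrightarrow>
             (let x = smd_iter X h vt dvt x0 \<beta> dG \<omega>;
                  \<zeta> = (\<lambda>i. dG (x (i - 1)) (\<omega> i) - dg (x (i - 1)));
                  f = (\<lambda>y. g y + h y);
                  V = Vdiv vt dvt x0;
                  S = (\<Sum>i=1..N. inverse (\<beta> (i - 1)));
                  xhat = inverse S *\<^sub>R (\<Sum>i=1..N. inverse (\<beta> (i - 1)) *\<^sub>R x i)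
              in \<forall>z\<in>X.
                 S * (f xhat - f z) \<le> (\<Sum>i=1..N. inverse (\<beta> (i - 1)) * (f (x i) - f z))
               \<and> (\<Sum>i=1..N. inverse (\<beta> (i - 1)) * (f (x i) - f z))
                   \<le> V x0 z - V (x N) z
                      + (\<Sum>i=1..N. (\<zeta> i \<bullet> (z - x (i - 1))) / \<beta> (i - 1)
                                   + (dual_norm nrm (\<zeta> i))\<^sup>2 / (\<beta> (i - 1))\<^sup>2)
               \<and> V x0 z - V (x N) z
                      + (\<Sum>i=1..N. (\<zeta> i \<bullet> (z - x (i - 1))) / \<beta> (i - 1)
                                   + (dual_norm nrm (\<zeta> i))\<^sup>2 / (\<beta> (i - 1))\<^sup>2)
                   \<le> 2 * V x0 z
                      + (\<Sum>i=1..N. (\<zeta> i \<bullet> (Z (i - 1) \<zeta> - x (i - 1))) / \<beta> (i - 1)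
                                   + 3 / 2 * (dual_norm nrm (\<zeta> i))\<^sup>2 / (\<beta> (i - 1))\<^sup>2)))"
proof -
  define Z where "Z = (\<lambda>i \<zeta>. zrec X vt dvt x0 \<beta> \<zeta> i)"
  have c1: "\<forall>\<zeta>. Z 0 \<zeta> = x0" by (simp add: Z_def)
  have c2: "\<forall>i<N. \<forall>\<zeta>. Z i \<zeta> \<in> X"
    using zrec_in[OF norm X(1,2) x0 vt_diff vt_strong] by (simp add: Z_def)
  have c3: "\<forall>i. \<forall>\<zeta>. Z i \<zeta> = Z i (restrict \<zeta> {1..i})"
    unfolding Z_def using zrec_restrict by blast
  have c4: "\<forall>i. Z i \<in> borel_measurable (PiM {1..i} (\<lambda>_. borel))"
    unfolding Z_def using zrec_meas[OF norm X(1,2) x0 vt_diff vt_C1 vt_strong] by blast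
  show ?thesis
    apply (rule exI[of _ Z])
    apply (intro conjI c1 c2 c3 c4)
    apply (intro allI impI)
    subgoal for \<omega>
      apply (unfold Let_def Z_def)
      apply (rule main_ineqs[OF norm X(1,2) g_convex g_diff g_lip vt_diff vt_strong h_convex h_cont x0 \<beta>_pos \<beta>_ge N,
        where x = "smd_iter X h vt dvt x0 \<beta> dG \<omega>"
          and \<zeta> = "\<lambda>i. dG (smd_iter X h vt dvt x0 \<beta> dG \<omega> (i - 1)) (\<omega> i) - dg (smd_iter X h vt dvt x0 \<beta> dG \<omega> (i - 1))",
        unfolded Let_def])
       apply simp_all
      done
    done
qed

end
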